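(* For $n\le 3$ there is no $[[n,1,3;1]]$ entanglement-assisted stabilizer code (CSS or not): there do not exist $n$ independent pairwise commuting Pauli operators on $n+1$ qubits (qubits $1,\dots,n$ held by Alice, qubit $n+1$ held by Bob), exactly one acting as $X$ on Bob's qubit, exactly one as $Z$, and the rest trivially there, such that for every pair $E_a,E_b\in\{I\}\cup\{X_i,Y_i,Z_i:1\le i\le n\}$ of errors on Alice's qubits, $E_a^\dagger E_b$ either anticommutes with some generator or lies (up to phase) in the generated group.
   Context: $X,Y,Z$ are the single-qubit Pauli matrices and $P_i$ denotes the operator acting as $P$ on qubit $i$ and as identity elsewhere. *)

theory Defs
  imports Main
begin

text \<open>Single-qubit Pauli matrices modulo global phase.\<close>
datatype pauli = PI | PX | PY | PZ

fun pmul :: "pauli \<Rightarrow> pauli \<Rightarrow> pauli" where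
  "pmul PI p = p"
| "pmul p PI = p"
| "pmul PX PX = PI" | "pmul PY PY = PI" | "pmul PZ PZ = PI"
| "pmul PX PY = PZ" | "pmul PY PX = PZ"
| "pmul PY PZ = PX" | "pmul PZ PY = PX"
| "pmul PZ PX = PY" | "pmul PX PZ = PY"

text \<open>A multi-qubit Pauli operator (up to phase): qubit index \<Rightarrow> single-qubit Pauli;
  qubits are numbered from 0.\<close>
type_synonym pauli_op = "nat \<Rightarrow> pauli"

definition op_mul :: "pauli_op \<Rightarrow> pauli_op \<Rightarrow> pauli_op" where
  "op_mul P Q = (\<lambda>i. pmul (P i) (Q i))"

definition op_id :: pauli_op where
  "op_id = (\<lambda>_. PI)"

definition supported_on :: "nat \<Rightarrow> pauli_op \<Rightarrow> bool" where
  "supported_on m P \<longleftrightarrow> (\<forall>i\<ge>m. P i = PI)"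

definition anti1 :: "pauli \<Rightarrow> pauli \<Rightarrow> bool" where
  "anti1 p q \<longleftrightarrow> p \<noteq> PI \<and> q \<noteq> PI \<and> p \<noteq> q"

text \<open>Two operators supported on {0..<m} commute iff they anticommute on an even number of qubits.\<close>
definition commute_on :: "nat \<Rightarrow> pauli_op \<Rightarrow> pauli_op \<Rightarrow> bool" where
  "commute_on m P Q \<longleftrightarrow> even (card {i. i < m \<and> anti1 (P i) (Q i)})"

inductive_set gen_group :: "pauli_op set \<Rightarrow> pauli_op set" for G where
  gen_id: "op_id \<in> gen_group G"
| gen_base: "g \<in> G \<Longrightarrow> g \<in> gen_group G"
| gen_mul: "a \<in> gen_group G \<Longrightarrow> b \<in> gen_group G \<Longrightarrow> op_mul a b \<in> gen_group G"

definition single :: "nat \<Rightarrow> pauli \<Rightarrow> pauli_op" where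
  "single i p = (\<lambda>j. if j = i then p else PI)"

definition alice_errors :: "nat \<Rightarrow> pauli_op set" where
  "alice_errors n = {op_id} \<union> {single i p | i p. i < n \<and> p \<in> {PX, PY, PZ}}"

text \<open>An [[n,1,3;1]] entanglement-assisted stabilizer code: n generators on n+1 qubits
  (Alice: 0..<n, Bob: qubit n).\<close>
definition EA_code_n13_1 :: "nat \<Rightarrow> pauli_op list \<Rightarrow> bool" where
  "EA_code_n13_1 n gens \<longleftrightarrow>
     length gens = n \<and> distinct gens
   \<and> (\<forall>g\<in>set gens. supported_on (n+1) g)
   \<and> (\<forall>g\<in>set gens. g \<notin> gen_group (set gens - {g}))
   \<and> (\<forall>g\<in>set gens. \<forall>h\<in>set gens. commute_on (n+1) g h)
   \<and> card {g\<in>set gens. g n = PX} = 1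
   \<and> card {g\<in>set gens. g n = PZ} = 1
   \<and> (\<forall>g\<in>set gens. g n \<in> {PI, PX, PZ})
   \<and> (\<forall>Ea\<in>alice_errors n. \<forall>Eb\<in>alice_errors n.
        (\<exists>g\<in>set gens. \<not> commute_on (n+1) (op_mul Ea Eb) g)
        \<or> op_mul Ea Eb \<in> gen_group (set gens))"

end

theory Submission
  imports Defs
begin

lemma pmul_comm: "pmul p q = pmul q p" by (cases p; cases q; simp)
lemma pmul_assoc: "pmul (pmul p q) r = pmul p (pmul q r)" by (cases p; cases q; cases r; simp)
lemma pmul_lc: "pmul p (pmul q r) = pmul q (pmul p r)" by (cases p; cases q; cases r; simp)
lemma pmul_self[simp]: "pmul p p = PI" by (cases p; simp)
lemma pmul_self2[simp]: "pmul p (pmul p q) = q" by (cases p; cases q; simp)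
lemma pmul_PI2[simp]: "pmul p PI = p" by (cases p; simp)

definition sel :: "bool \<Rightarrow> pauli_op \<Rightarrow> pauli_op" where
  "sel b x = (if b then x else op_id)"

lemma gg3:
  assumes "h \<in> gen_group S" "S \<subseteq> {a,b,c}"
  shows "\<exists>x y z. h = op_mul (sel x a) (op_mul (sel y b) (sel z c))"
  using assms(1)
proof induct
  case gen_id
  show ?case by (rule exI[of _ False], rule exI[of _ False], rule exI[of _ False])
     (simp add: sel_def op_mul_def op_id_def)
next
  case (gen_base g)
  then have "g = a \<or> g = b \<or> g = c" using assms(2) by blast
  then show ?case
  proof (elim disjE)
    assume g: "g = a" show ?thesis
      by (rule exI[of _ True], rule exI[of _ False], rule exI[of _ False]) (simp add: g sel_def op_mul_def op_id_def)
  next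
    assume g: "g = b" show ?thesis
      by (rule exI[of _ False], rule exI[of _ True], rule exI[of _ False]) (simp add: g sel_def op_mul_def op_id_def)
  next
    assume g: "g = c" show ?thesis
      by (rule exI[of _ False], rule exI[of _ False], rule exI[of _ True]) (simp add: g sel_def op_mul_def op_id_def)
  qed
next
  case (gen_mul u v)
  then obtain x y z x' y' z' where u: "u = op_mul (sel x a) (op_mul (sel y b) (sel z c))"
    and v: "v = op_mul (sel x' a) (op_mul (sel y' b) (sel z' c))" by blast
  show ?case
  proof (rule exI[of _ "x \<noteq> x'"], rule exI[of _ "y \<noteq> y'"], rule exI[of _ "z \<noteq> z'"])
    show "op_mul u v = op_mul (sel (x \<noteq> x') a) (op_mul (sel (y \<noteq> y') b) (sel (z \<noteq> z') c))"
      unfolding u v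
      by (rule ext, cases x; cases x'; cases y; cases y'; cases z; cases z';
          simp add: sel_def op_mul_def op_id_def pmul_assoc pmul_comm pmul_lc)
  qed
qed

lemma ex_pauli: "(\<exists>p::pauli. P p) \<longleftrightarrow> P PI \<or> P PX \<or> P PY \<or> P PZ"
  by (metis pauli.exhaust)

lemma brute: "\<exists>p q. (p \<noteq> PI \<or> q \<noteq> PI) \<and> (anti1 p a1 = anti1 q a2) \<and> (anti1 p b1 = anti1 q b2) \<and> (anti1 p c1 = anti1 q c2)"
  apply (cases a1; cases a2; cases b1; cases b2; cases c1; cases c2)
  apply (simp_all only: ex_pauli anti1_def pauli.distinct simp_thms)
  done

lemma commute_two:
  assumes "j \<noteq> k" "j < m" "k < m"
  shows "commute_on m (\<lambda>i. if i = j then p else if i = k then q else PI) g \<longleftrightarrow> (anti1 p (g j) = anti1 q (g k))"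
proof -
  have e: "{i. i < m \<and> anti1 ((\<lambda>i. if i = j then p else if i = k then q else PI) i) (g i)}
     = (if anti1 p (g j) then {j} else {}) \<union> (if anti1 q (g k) then {k} else {})"
    using assms by (auto simp: anti1_def split: if_splits)
  show ?thesis unfolding commute_on_def e using assms(1) by auto
qed

lemma core:
  assumes jk: "j \<noteq> k" "j < n" "k < n"
    and S: "S \<subseteq> {a,b,c}" and an: "a n = PX" and bn: "b n = PZ" and cn: "c n = PI"
    and cne: "c = op_id \<or> (\<exists>i. c i \<noteq> PI \<and> i \<noteq> j \<and> i \<noteq> k)"
    and H: "\<forall>Ea\<in>alice_errors n. \<forall>Eb\<in>alice_errors n.
        (\<exists>g\<in>S. \<not> commute_on (n+1) (op_mul Ea Eb) g) \<or> op_mul Ea Eb \<in> gen_group S"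
  shows False
proof -
  obtain p q where pq: "p \<noteq> PI \<or> q \<noteq> PI" "anti1 p (a j) = anti1 q (a k)"
     "anti1 p (b j) = anti1 q (b k)" "anti1 p (c j) = anti1 q (c k)"
    using brute by blast
  define Ea where "Ea = (if p = PI then op_id else single j p)"
  define Eb where "Eb = (if q = PI then op_id else single k q)"
  define E where "E = (\<lambda>i. if i = j then p else if i = k then q else PI)"
  have Ea: "Ea \<in> alice_errors n"
    using jk unfolding Ea_def alice_errors_def by (cases p) auto
  have Eb: "Eb \<in> alice_errors n"
    using jk unfolding Eb_def alice_errors_def by (cases q) auto
  have EE: "op_mul Ea Eb = E"
    using jk unfolding Ea_def Eb_def E_def op_mul_def single_def op_id_def by (auto simp: fun_eq_iff)
  have comm: "commute_on (n+1) E g" if "g \<in> S" for g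
  proof -
    have "g = a \<or> g = b \<or> g = c" using that S by blast
    then show ?thesis unfolding E_def using commute_two[of j k "n+1" p q g] jk pq by auto
  qed
  have "(\<exists>g\<in>S. \<not> commute_on (n+1) (op_mul Ea Eb) g) \<or> op_mul Ea Eb \<in> gen_group S"
    using H Ea Eb by blast
  then have "E \<in> gen_group S" using comm unfolding EE by blast
  then obtain x y z where xyz: "E = op_mul (sel x a) (op_mul (sel y b) (sel z c))"
    using gg3 S by blast
  have "E n = PI" using jk unfolding E_def by auto
  then have "\<not> x \<and> \<not> y" using xyz an bn cn
    by (cases x; cases y; cases z; simp add: op_mul_def sel_def op_id_def fun_eq_iff)
  then have Ez: "E = sel z c" using xyz by (auto simp: op_mul_def sel_def op_id_def fun_eq_iff)
  have Enid: "E \<noteq> op_id" using pq(1) jk unfolding E_def op_id_def fun_eq_iff by metis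
  show False
  proof (cases z)
    case False then show ?thesis using Ez Enid by (simp add: sel_def)
  next
    case True
    then have "E = c" using Ez by (simp add: sel_def)
    then show ?thesis using cne Enid unfolding E_def by auto
  qed
qed

theorem mainTheorem8:
  fixes n :: nat
  assumes "n \<le> 3"
  shows "\<not> (\<exists>gens. EA_code_n13_1 n gens)"
proof
  assume "\<exists>gens. EA_code_n13_1 n gens"
  then obtain gens where G: "EA_code_n13_1 n gens" by blast
  define S where "S = set gens"
  have cardS: "card S = n" using G unfolding EA_code_n13_1_def S_def by (metis distinct_card)
  have fin: "finite S" unfolding S_def by simp
  have sup: "\<forall>g\<in>S. supported_on (n+1) g" using G unfolding EA_code_n13_1_def S_def by blast
  have ind: "\<forall>g\<in>S. g \<notin> gen_group (S - {g})" using G unfolding EA_code_n13_1_def S_def by blast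
  have bob: "\<forall>g\<in>S. g n \<in> {PI, PX, PZ}" using G unfolding EA_code_n13_1_def S_def by blast
  have H: "\<forall>Ea\<in>alice_errors n. \<forall>Eb\<in>alice_errors n.
        (\<exists>g\<in>S. \<not> commute_on (n+1) (op_mul Ea Eb) g) \<or> op_mul Ea Eb \<in> gen_group S"
    using G unfolding EA_code_n13_1_def S_def by blast
  have "card {g\<in>S. g n = PX} = 1" using G unfolding EA_code_n13_1_def S_def by blast
  then obtain gx where gx: "{g\<in>S. g n = PX} = {gx}" using card_1_singletonE by blast
  have "card {g\<in>S. g n = PZ} = 1" using G unfolding EA_code_n13_1_def S_def by blast
  then obtain gz where gz: "{g\<in>S. g n = PZ} = {gz}" using card_1_singletonE by blast
  have gxS: "gx \<in> S" "gx n = PX" using gx by auto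
  have gzS: "gz \<in> S" "gz n = PZ" using gz by auto
  have ne: "gx \<noteq> gz" using gxS gzS by auto
  have two: "card {gx, gz} = 2" using ne by simp
  have sub2: "{gx, gz} \<subseteq> S" using gxS gzS by auto
  have n2: "n \<ge> 2" using card_mono[OF fin sub2] two cardS by simp
  have others: "s = gx \<or> s = gz \<or> s n = PI" if "s \<in> S" for s
    using that bob gx gz by blast
  show False
  proof (cases "n = 2")
    case True
    have "S = {gx, gz}" using card_subset_eq[OF fin sub2] two cardS True by simp
    then have Ssub: "S \<subseteq> {gx, gz, op_id}" by blast
    show False using core[of 0 1 n S gx gz op_id] True gxS gzS Ssub H by (simp add: op_id_def)
  next
    case False
    then have n3: "n = 3" using n2 assms by simp
    have "card (S - {gx, gz}) = 1" using card_Diff_subset[OF _ sub2] two cardS n3 by simp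
    then obtain g3 where g3: "S - {gx, gz} = {g3}" using card_1_singletonE by blast
    have g3S: "g3 \<in> S" "g3 \<noteq> gx" "g3 \<noteq> gz" using g3 by auto
    have g3n: "g3 n = PI" using others g3S by blast
    have Ssub: "S \<subseteq> {gx, gz, g3}" using g3 by blast
    have "g3 \<noteq> op_id" using ind g3S gen_group.gen_id by metis
    then obtain i where i: "g3 i \<noteq> PI" unfolding op_id_def by auto
    have "supported_on 4 g3" using sup g3S n3 by simp
    then have "i < 4" using i unfolding supported_on_def by (meson not_le)
    then have "i < 3" using g3n i n3 by (cases "i = 3") auto
    then have "i = 0 \<or> i = 1 \<or> i = 2" by auto
    then show False
    proof (elim disjE)
      assume "i = 0" then have "\<exists>i. g3 i \<noteq> PI \<and> i \<noteq> 1 \<and> i \<noteq> 2" using i by auto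
      then show False
        using core[of 1 2 n S gx gz g3] n3 gxS gzS g3n Ssub H by auto
    next
      assume "i = 1" then have "\<exists>i. g3 i \<noteq> PI \<and> i \<noteq> 0 \<and> i \<noteq> 2" using i by auto
      then show False
        using core[of 0 2 n S gx gz g3] n3 gxS gzS g3n Ssub H by auto
    next
      assume "i = 2" then have "\<exists>i. g3 i \<noteq> PI \<and> i \<noteq> 0 \<and> i \<noteq> 1" using i by auto
      then show False
        using core[of 0 1 n S gx gz g3] n3 gxS gzS g3n Ssub H by auto
    qed
  qed
qed

end
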